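(* Let $(A,\Delta)$ be an algebraic quantum hypergroup. If $A$ has an identity $1$, then $\Delta(1)=1\otimes1$.
   Context: **Standing definitions.** All algebras are over $\mathbb C$, associative, possibly without identity, with non-degenerate product. $M(A)$ denotes the multiplier algebra and $\iota$ the identity map. *Comultiplication.* A regular comultiplication is a linear map $\Delta:A\to M(A\otimes A)$, not assumed multiplicative, such that: - $\Delta(a)(1\otimes b)$, $(a\otimes1)\Delta(b)$, $\Delta(a)(b\otimes1)$ and $(1\otimes a)\Delta(b)$ lie in $A\otimes A$; - $(a\otimes1\otimes1)(\Delta\otimes\iota)(\Delta(b)(1\otimes c))=(\iota\otimes\Delta)((a\otimes1)\Delta(b))(1\otimes1\otimes c)$. *Counit.* A counit is a homomorphism $\varepsilon:A\to\mathbb C$ with $(\varepsilon\otimes\iota)\Delta=\iota=(\iota\otimes\varepsilon)\Delta$. *Integrals.* A left integral is a nonzero $\varphi$ with $(\iota\otimes\varphi)\Delta(a)=\varphi(a)1$ in $M(A)$. A functional is faithful if $f(ab)=0\ \forall b$ or $f(ba)=0\ \forall b$ forces $a=0$. *Antipode.* An antipode relative to a faithful left integral $\varphi$ is a bijective linear anti-homomorphism $S:A\to A$ with $S((\iota\otimes\varphi)(\Delta(a)(1\otimes b)))=(\iota\otimes\varphi)((1\otimes a)\Delta(b))$ for all $a,b$. *Algebraic quantum hypergroup.* A pair $(A,\Delta)$ with $\Delta$ a regular comultiplication admitting a counit, a faithful left integral $\varphi$ and an antipode relative to $\varphi$. *)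

theory Defs
  imports Complex_Main
begin

class cvec = ab_group_add +
  fixes scaleC :: "complex \<Rightarrow> 'a \<Rightarrow> 'a" (infixr "*\<^sub>C" 75)
  assumes scaleC_add_right: "c *\<^sub>C (x + y) = c *\<^sub>C x + c *\<^sub>C y"
    and scaleC_add_left: "(c + d) *\<^sub>C x = c *\<^sub>C x + d *\<^sub>C x"
    and scaleC_scaleC: "c *\<^sub>C (d *\<^sub>C x) = (c * d) *\<^sub>C x"
    and scaleC_one: "1 *\<^sub>C x = x"

instantiation complex :: cvec
begin
definition scaleC_complex :: "complex \<Rightarrow> complex \<Rightarrow> complex" where
  "scaleC_complex c x = c * x"
instance by standard (auto simp: scaleC_complex_def algebra_simps)
end

class calg = cvec + ring +
  assumes scaleC_mult_left: "c *\<^sub>C (x * y) = (c *\<^sub>C x) * y"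
    and scaleC_mult_right: "c *\<^sub>C (x * y) = x * (c *\<^sub>C y)"

definition clinear :: "('a::cvec \<Rightarrow> 'b::cvec) \<Rightarrow> bool" where
  "clinear f \<longleftrightarrow> (\<forall>x y. f (x + y) = f x + f y) \<and> (\<forall>c x. f (c *\<^sub>C x) = c *\<^sub>C f x)"

definition cbilinear :: "('a::cvec \<Rightarrow> 'b::cvec \<Rightarrow> complex) \<Rightarrow> bool" where
  "cbilinear \<beta> \<longleftrightarrow> (\<forall>b. clinear (\<lambda>a. \<beta> a b)) \<and> (\<forall>a. clinear (\<lambda>b. \<beta> a b))"

definition nondegenerate_product :: "'a::calg itself \<Rightarrow> bool" where
  "nondegenerate_product _ \<longleftrightarrow>
     (\<forall>a::'a. (\<forall>b. a * b = 0) \<longrightarrow> a = 0) \<and> (\<forall>a::'a. (\<forall>b. b * a = 0) \<longrightarrow> a = 0)"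

text \<open>Formal finite sums of elementary tensors, identified when no bilinear functional
  separates them (this is the usual algebraic tensor product, realised inside the dual
  of the space of bilinear forms).\<close>

definition tev :: "('a \<Rightarrow> 'b \<Rightarrow> complex) \<Rightarrow> (('a \<times> 'b) \<times> complex) list \<Rightarrow> complex" where
  "tev \<beta> xs = (\<Sum>((a, b), c) \<leftarrow> xs. c * \<beta> a b)"

definition tens_eq :: "(('a::cvec \<times> 'b::cvec) \<times> complex) list \<Rightarrow> (('a \<times> 'b) \<times> complex) list \<Rightarrow> bool" where
  "tens_eq xs ys \<longleftrightarrow> (\<forall>\<beta>. cbilinear \<beta> \<longrightarrow> tev \<beta> xs = tev \<beta> ys)"

quotient_type (overloaded) ('a, 'b) tensor = "(('a::cvec \<times> 'b::cvec) \<times> complex) list" / tens_eq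
  by (auto simp: equivp_def tens_eq_def fun_eq_iff)

lemma tev_append[simp]: "tev \<beta> (xs @ ys) = tev \<beta> xs + tev \<beta> ys"
  by (simp add: tev_def)

lemma tev_neg: "tev \<beta> (map (\<lambda>((a, b), c). ((a, b), - c)) xs) = - tev \<beta> xs"
  by (induction xs) (auto simp: tev_def)

lemma tev_scale: "tev \<beta> (map (\<lambda>((a, b), c). ((a, b), d * c)) xs) = d * tev \<beta> xs"
  by (induction xs) (auto simp: tev_def algebra_simps)

instantiation tensor :: (cvec, cvec) cvec
begin
lift_definition zero_tensor :: "('a, 'b) tensor" is "[]" .
lift_definition plus_tensor :: "('a, 'b) tensor \<Rightarrow> ('a, 'b) tensor \<Rightarrow> ('a, 'b) tensor"
  is "(@)" by (auto simp: tens_eq_def)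
lift_definition uminus_tensor :: "('a, 'b) tensor \<Rightarrow> ('a, 'b) tensor"
  is "map (\<lambda>((a, b), c). ((a, b), - c))" by (auto simp: tens_eq_def tev_neg)
lift_definition minus_tensor :: "('a, 'b) tensor \<Rightarrow> ('a, 'b) tensor \<Rightarrow> ('a, 'b) tensor"
  is "\<lambda>xs ys. xs @ map (\<lambda>((a, b), c). ((a, b), - c)) ys" by (auto simp: tens_eq_def tev_neg)
lift_definition scaleC_tensor :: "complex \<Rightarrow> ('a, 'b) tensor \<Rightarrow> ('a, 'b) tensor"
  is "\<lambda>d. map (\<lambda>((a, b), c). ((a, b), d * c))" by (auto simp: tens_eq_def tev_scale)
lemma tev_nil[simp]: "tev \<beta> [] = 0" by (simp add: tev_def)

instance
proof
  fix a b c :: "('a, 'b) tensor" and r s :: complex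
  show "a + b + c = a + (b + c)" by transfer (auto simp: tens_eq_def add.assoc)
  show "a + b = b + a" by transfer (auto simp: tens_eq_def add.commute)
  show "0 + a = a" by transfer (auto simp: tens_eq_def)
  show "- a + a = 0" by transfer (auto simp: tens_eq_def tev_neg)
  show "a - b = a + - b" by transfer (auto simp: tens_eq_def)
  show "r *\<^sub>C (a + b) = r *\<^sub>C a + r *\<^sub>C b" by transfer (auto simp: tens_eq_def tev_scale)
  show "(r + s) *\<^sub>C a = r *\<^sub>C a + s *\<^sub>C a" by transfer (auto simp: tens_eq_def tev_scale[symmetric];
      induct_tac a; auto simp: tev_def algebra_simps)
  show "r *\<^sub>C s *\<^sub>C a = (r * s) *\<^sub>C a" by transfer (auto simp: tens_eq_def;
      induct_tac a; auto simp: tev_def algebra_simps)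
  show "1 *\<^sub>C a = a" by transfer (auto simp: tens_eq_def tev_scale)
qed
end


definition tp :: "'a::cvec \<Rightarrow> 'b::cvec \<Rightarrow> ('a, 'b) tensor" where
  "tp a b = abs_tensor [((a, b), 1)]"

definition tens_prod_list ::
  "(('a::times \<times> 'b::times) \<times> complex) list \<Rightarrow> (('a \<times> 'b) \<times> complex) list \<Rightarrow> (('a \<times> 'b) \<times> complex) list" where
  "tens_prod_list xs ys =
     concat (map (\<lambda>((a, b), c). map (\<lambda>((a', b'), c'). ((a * a', b * b'), c * c')) ys) xs)"

instantiation tensor :: ("{cvec,times}", "{cvec,times}") times
begin
definition times_tensor :: "('a, 'b) tensor \<Rightarrow> ('a, 'b) tensor \<Rightarrow> ('a, 'b) tensor" where
  "x * y = abs_tensor (tens_prod_list (rep_tensor x) (rep_tensor y))"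
instance ..
end

definition tmap :: "('a::cvec \<Rightarrow> 'c::cvec) \<Rightarrow> ('b::cvec \<Rightarrow> 'd::cvec) \<Rightarrow> ('a, 'b) tensor \<Rightarrow> ('c, 'd) tensor" where
  "tmap f g x = abs_tensor (map (\<lambda>((a, b), c). ((f a, g b), c)) (rep_tensor x))"

text \<open>Slice maps \<open>\<iota> \<otimes> \<omega> : A \<otimes> B \<rightarrow> A\<close> and \<open>\<omega> \<otimes> \<iota> : A \<otimes> B \<rightarrow> B\<close> for linear functionals
  \<open>\<omega>\<close> (using \<open>A \<otimes> \<complex> = A\<close>, \<open>\<complex> \<otimes> B = B\<close>).\<close>
definition slice_r :: "('b::cvec \<Rightarrow> complex) \<Rightarrow> ('a::cvec, 'b) tensor \<Rightarrow> 'a" where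
  "slice_r \<omega> x = (\<Sum>((a, b), c) \<leftarrow> rep_tensor x. (c * \<omega> b) *\<^sub>C a)"

definition slice_l :: "('a::cvec \<Rightarrow> complex) \<Rightarrow> ('a, 'b::cvec) tensor \<Rightarrow> 'b" where
  "slice_l \<omega> x = (\<Sum>((a, b), c) \<leftarrow> rep_tensor x. (c * \<omega> a) *\<^sub>C b)"

definition tassoc :: "('a::cvec, ('b::cvec, 'c::cvec) tensor) tensor \<Rightarrow> (('a, 'b) tensor, 'c) tensor" where
  "tassoc x = abs_tensor (concat (map (\<lambda>((a, t), c).
      map (\<lambda>((b, d), c'). ((tp a b, d), c * c')) (rep_tensor t)) (rep_tensor x)))"

text \<open>Since \<open>A\<close> is unital, \<open>M(A) = A\<close> and
  \<open>M(A \<otimes> A) = A \<otimes> A\<close>, \<open>M(A \<otimes> A \<otimes> A) = A \<otimes> A \<otimes> A\<close>, so the comultiplication is a linear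
  map \<open>A \<rightarrow> A \<otimes> A\<close> and the multipliers \<open>1 \<otimes> b\<close> etc. are genuine elements.\<close>

definition is_identity :: "'a::calg \<Rightarrow> bool" where
  "is_identity e \<longleftrightarrow> (\<forall>x. e * x = x \<and> x * e = x)"

definition regular_comultiplication :: "'a::calg \<Rightarrow> ('a \<Rightarrow> ('a, 'a) tensor) \<Rightarrow> bool" where
  "regular_comultiplication e \<Delta> \<longleftrightarrow>
     clinear \<Delta> \<and>
     (\<forall>a b c.
        tp (tp a e) e * tmap \<Delta> id (\<Delta> b * tp e c)
      = tassoc (tmap id \<Delta> (tp a e * \<Delta> b)) * tp (tp e e) c)"

definition is_counit :: "('a::calg \<Rightarrow> ('a, 'a) tensor) \<Rightarrow> ('a \<Rightarrow> complex) \<Rightarrow> bool" where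
  "is_counit \<Delta> \<epsilon> \<longleftrightarrow>
     clinear \<epsilon> \<and> (\<forall>x y. \<epsilon> (x * y) = \<epsilon> x * \<epsilon> y) \<and>
     (\<forall>a. slice_l \<epsilon> (\<Delta> a) = a) \<and> (\<forall>a. slice_r \<epsilon> (\<Delta> a) = a)"

definition left_integral :: "'a::calg \<Rightarrow> ('a \<Rightarrow> ('a, 'a) tensor) \<Rightarrow> ('a \<Rightarrow> complex) \<Rightarrow> bool" where
  "left_integral e \<Delta> \<phi> \<longleftrightarrow>
     clinear \<phi> \<and> \<phi> \<noteq> (\<lambda>_. 0) \<and> (\<forall>a. slice_r \<phi> (\<Delta> a) = \<phi> a *\<^sub>C e)"

definition faithful :: "('a::calg \<Rightarrow> complex) \<Rightarrow> bool" where
  "faithful f \<longleftrightarrow> (\<forall>a. ((\<forall>b. f (a * b) = 0) \<or> (\<forall>b. f (b * a) = 0)) \<longrightarrow> a = 0)"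

definition antipode_rel :: "'a::calg \<Rightarrow> ('a \<Rightarrow> ('a, 'a) tensor) \<Rightarrow> ('a \<Rightarrow> complex) \<Rightarrow> ('a \<Rightarrow> 'a) \<Rightarrow> bool" where
  "antipode_rel e \<Delta> \<phi> S \<longleftrightarrow>
     bij S \<and> clinear S \<and> (\<forall>x y. S (x * y) = S y * S x) \<and>
     (\<forall>a b. S (slice_r \<phi> (\<Delta> a * tp e b)) = slice_r \<phi> (tp e a * \<Delta> b))"

definition algebraic_quantum_hypergroup :: "'a::calg \<Rightarrow> ('a \<Rightarrow> ('a, 'a) tensor) \<Rightarrow> bool" where
  "algebraic_quantum_hypergroup e \<Delta> \<longleftrightarrow>
     nondegenerate_product TYPE('a) \<and>
     regular_comultiplication e \<Delta> \<and>
     (\<exists>\<epsilon>. is_counit \<Delta> \<epsilon>) \<and>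
     (\<exists>\<phi> S. left_integral e \<Delta> \<phi> \<and> faithful \<phi> \<and> antipode_rel e \<Delta> \<phi> S)"

end

theory Submission
  imports Defs
begin

lemma tev_Nil[simp]: "tev \<beta> [] = 0" by (simp add: tev_def)
lemma tev_Cons[simp]: "tev \<beta> (((a, b), c) # xs) = c * \<beta> a b + tev \<beta> xs"
  by (simp add: tev_def)

lemma tev_add_fun: "tev (\<lambda>p q. f p q + g p q) Y = tev f Y + tev g Y"
  by (induction Y) (auto simp: algebra_simps)

lemma tev_cmult: "tev (\<lambda>p q. k * f p q) Y = k * tev f Y"
  by (induction Y) (auto simp: algebra_simps)

lemma tev_zero_fun: "tev (\<lambda>p q. 0) Y = 0"
  by (induction Y) auto

lemma tev_map_snd:
  "tev F (map (\<lambda>((p, q), c). ((p, g p q), c)) L) = tev (\<lambda>p q. F p (g p q)) L"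
  by (induction L) auto

lemma tev_concat: "tev \<beta> (concat xs) = (\<Sum>x\<leftarrow>xs. tev \<beta> x)"
  by (induction xs) auto

lemma tev_prod_list:
  "tev \<beta> (tens_prod_list X Y) = tev (\<lambda>p q. tev (\<lambda>p' q'. \<beta> (p * p') (q * q')) Y) X"
proof (induction X)
  case Nil
  then show ?case by (simp add: tens_prod_list_def)
next
  case (Cons x X)
  obtain a b c where x: "x = ((a, b), c)" by (metis prod.collapse)
  have "tev \<beta> (map (\<lambda>((a', b'), c'). ((a * a', b * b'), c * c')) Y)
      = c * tev (\<lambda>p' q'. \<beta> (a * p') (b * q')) Y"
    by (induction Y) (auto simp: algebra_simps)
  then show ?case using Cons by (simp add: x tens_prod_list_def)
qed

lemma tev_swap:
  "tev (\<lambda>p q. tev (\<lambda>p' q'. h p q p' q') Y) X = tev (\<lambda>p' q'. tev (\<lambda>p q. h p q p' q') X) Y"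
proof (induction X)
  case Nil
  then show ?case by (simp add: tev_zero_fun)
next
  case (Cons x X)
  obtain a b c where x: "x = ((a, b), c)" by (metis prod.collapse)
  show ?case using Cons by (simp add: x tev_add_fun tev_cmult)
qed

lemma clinear_zero: "clinear f \<Longrightarrow> f 0 = 0"
  unfolding clinear_def by (metis add_cancel_right_right add_0)

lemma clinear_scale: "clinear f \<Longrightarrow> f (c *\<^sub>C x) = c * f x"
  unfolding clinear_def by (simp add: scaleC_complex_def)

lemma clinear_add: "clinear f \<Longrightarrow> f (x + y) = f x + f y"
  unfolding clinear_def by simp

lemma cbilinear_zero: "cbilinear (\<lambda>p q. 0)"
  unfolding cbilinear_def clinear_def by (simp add: scaleC_complex_def)

lemma cbilinear_add: "cbilinear f \<Longrightarrow> cbilinear g \<Longrightarrow> cbilinear (\<lambda>p q. f p q + g p q)"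
  unfolding cbilinear_def clinear_def by (simp add: scaleC_complex_def algebra_simps)

lemma cbilinear_cmult: "cbilinear f \<Longrightarrow> cbilinear (\<lambda>p q. k * f p q)"
  unfolding cbilinear_def clinear_def by (simp add: scaleC_complex_def algebra_simps)

lemma tev_bilinear:
  assumes "\<And>a b. cbilinear (\<lambda>p q. F p q a b)"
  shows "cbilinear (\<lambda>p q. tev (\<lambda>a b. F p q a b) Y)"
proof (induction Y)
  case Nil
  then show ?case by (simp add: cbilinear_zero)
next
  case (Cons y Y)
  obtain a b c where y: "y = ((a, b), c)" by (metis prod.collapse)
  show ?case using Cons by (simp add: y cbilinear_add cbilinear_cmult assms)
qed

lemma cbilinear_mult_right:
  fixes \<beta> :: "'a::calg \<Rightarrow> 'b::calg \<Rightarrow> complex"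
  assumes "cbilinear \<beta>"
  shows "cbilinear (\<lambda>p q. \<beta> (p * a) (q * b))"
  using assms unfolding cbilinear_def clinear_def
  by (simp add: distrib_right scaleC_mult_left[symmetric])

lemma cbilinear_mult_left:
  fixes \<beta> :: "'a::calg \<Rightarrow> 'b::calg \<Rightarrow> complex"
  assumes "cbilinear \<beta>"
  shows "cbilinear (\<lambda>p q. \<beta> (a * p) (b * q))"
  using assms unfolding cbilinear_def clinear_def
  by (simp add: distrib_left scaleC_mult_right[symmetric])

lemma tens_prod_resp:
  fixes X X' Y Y' :: "((('a::calg) \<times> ('b::calg)) \<times> complex) list"
  assumes "tens_eq X X'" "tens_eq Y Y'"
  shows "tens_eq (tens_prod_list X Y) (tens_prod_list X' Y')"
  unfolding tens_eq_def
proof (intro allI impI)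
  fix \<beta> :: "'a \<Rightarrow> 'b \<Rightarrow> complex" assume b: "cbilinear \<beta>"
  have "tev \<beta> (tens_prod_list X Y) = tev (\<lambda>p q. tev (\<lambda>p' q'. \<beta> (p * p') (q * q')) Y) X"
    by (rule tev_prod_list)
  also have "\<dots> = tev (\<lambda>p q. tev (\<lambda>p' q'. \<beta> (p * p') (q * q')) Y) X'"
    using assms(1)[unfolded tens_eq_def, rule_format,
        OF tev_bilinear[OF cbilinear_mult_right[OF b]]] .
  also have "\<dots> = tev (\<lambda>p' q'. tev (\<lambda>p q. \<beta> (p * p') (q * q')) X') Y"
    by (rule tev_swap)
  also have "\<dots> = tev (\<lambda>p' q'. tev (\<lambda>p q. \<beta> (p * p') (q * q')) X') Y'"
    using assms(2)[unfolded tens_eq_def, rule_format,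
        OF tev_bilinear[OF cbilinear_mult_left[OF b]]] .
  also have "\<dots> = tev (\<lambda>p q. tev (\<lambda>p' q'. \<beta> (p * p') (q * q')) Y') X'"
    by (rule tev_swap[symmetric])
  also have "\<dots> = tev \<beta> (tens_prod_list X' Y')"
    by (rule tev_prod_list[symmetric])
  finally show "tev \<beta> (tens_prod_list X Y) = tev \<beta> (tens_prod_list X' Y')" .
qed

lemma tens_eq_refl: "tens_eq x x"
  by (simp add: tens_eq_def)

lemma rep_abs: "tens_eq (rep_tensor (abs_tensor x)) x"
  using Quotient3_rep_abs[OF Quotient3_tensor tens_eq_refl] .

lemma abs_rep: "abs_tensor (rep_tensor x) = x"
  using Quotient3_abs_rep[OF Quotient3_tensor] .

lemma core:
  fixes \<phi> :: "'a::calg \<Rightarrow> complex" and ys :: "(('a \<times> 'a) \<times> complex) list"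
    and \<beta> :: "'a \<Rightarrow> 'a \<Rightarrow> complex"
  assumes lin: "clinear \<phi>" and fa: "faithful \<phi>" and bl: "cbilinear \<beta>"
    and H: "\<forall>\<omega>::'a\<Rightarrow>complex. clinear \<omega> \<longrightarrow> (\<forall>b. tev (\<lambda>p q. \<omega> p * \<phi> (q * b)) ys = 0)"
  shows "tev \<beta> ys = 0"
  using H
proof (induction "length ys" arbitrary: ys rule: less_induct)
  case less
  show ?case
  proof (cases ys)
    case Nil
    then show ?thesis by simp
  next
    case (Cons x rest)
    obtain a1 r1 c1 where x: "x = ((a1, r1), c1)" by (metis prod.collapse)
    define r where "r = c1 *\<^sub>C r1"
    have Hys: "c1 * (\<omega> a1 * \<phi> (r1 * b)) + tev (\<lambda>p q. \<omega> p * \<phi> (q * b)) rest = 0"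
      if "clinear \<omega>" for \<omega> :: "'a \<Rightarrow> complex" and b
      using less.prems that Cons x by simp
    have phr: "\<phi> (r * b) = c1 * \<phi> (r1 * b)" for b
      by (simp add: r_def scaleC_mult_left[symmetric] clinear_scale lin)
    have linr: "clinear (\<lambda>q. \<beta> p q)" for p using bl unfolding cbilinear_def by blast
    have linl: "clinear (\<lambda>p. \<beta> p q)" for q using bl unfolding cbilinear_def by blast
    have betar: "\<beta> p r = c1 * \<beta> p r1" for p
      using clinear_scale[OF linr[of p]] by (simp add: r_def)
    have len: "length rest < length ys" using Cons by simp
    show ?thesis
    proof (cases "\<forall>b. \<phi> (r * b) = 0")
      case True
      then have r0: "r = 0" using fa unfolding faithful_def by blast
      have "\<forall>\<omega>::'a\<Rightarrow>complex. clinear \<omega> \<longrightarrow> (\<forall>b. tev (\<lambda>p q. \<omega> p * \<phi> (q * b)) rest = 0)"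
      proof (intro allI impI)
        fix \<omega> :: "'a \<Rightarrow> complex" and b assume w: "clinear \<omega>"
        have "c1 * (\<omega> a1 * \<phi> (r1 * b)) = \<omega> a1 * \<phi> (r * b)" by (simp add: phr)
        also have "\<dots> = 0" using True by simp
        finally show "tev (\<lambda>p q. \<omega> p * \<phi> (q * b)) rest = 0" using Hys[OF w, of b] by (metis add_0)
      qed
      then have IH: "tev \<beta> rest = 0" using less.hyps[OF len] by blast
      have "c1 * \<beta> a1 r1 = 0" using betar[of a1] r0 clinear_zero[OF linr[of a1]] by simp
      then show ?thesis using Cons x IH by simp
    next
      case False
      then obtain b0 where d0: "\<phi> (r * b0) \<noteq> 0" by auto
      define d where "d = \<phi> (r * b0)"
      have dn: "d \<noteq> 0" using d0 d_def by simp
      define g where "g = (\<lambda>(p::'a) q. q + (- (\<phi> (q * b0) / d)) *\<^sub>C r)"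
      define rest' where "rest' = map (\<lambda>((p, q), c). ((p, g p q), c)) rest"
      have phig: "\<phi> (g p q * b) = \<phi> (q * b) - (\<phi> (q * b0) / d) * \<phi> (r * b)" for p q b
        by (simp add: g_def distrib_right scaleC_mult_left[symmetric] clinear_add clinear_scale lin)
      have H': "\<forall>\<omega>::'a\<Rightarrow>complex. clinear \<omega> \<longrightarrow> (\<forall>b. tev (\<lambda>p q. \<omega> p * \<phi> (q * b)) rest' = 0)"
      proof (intro allI impI)
        fix \<omega> :: "'a \<Rightarrow> complex" and b assume w: "clinear \<omega>"
        have e0: "tev (\<lambda>p q. \<omega> p * \<phi> (q * b0)) rest = - (\<omega> a1 * d)"
          using Hys[OF w, of b0] phr[of b0] unfolding d_def
          by (simp add: algebra_simps add_eq_0_iff)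
        have fe: "(\<lambda>p q. \<omega> p * \<phi> (g p q * b)) =
            (\<lambda>p q. \<omega> p * \<phi> (q * b) + (- (\<phi> (r * b) / d)) * (\<omega> p * \<phi> (q * b0)))"
          by (auto simp: fun_eq_iff phig algebra_simps)
        have "tev (\<lambda>p q. \<omega> p * \<phi> (q * b)) rest' = tev (\<lambda>p q. \<omega> p * \<phi> (g p q * b)) rest"
          by (simp add: rest'_def tev_map_snd)
        also have "\<dots> = tev (\<lambda>p q. \<omega> p * \<phi> (q * b)) rest
            + (- (\<phi> (r * b) / d)) * tev (\<lambda>p q. \<omega> p * \<phi> (q * b0)) rest"
          unfolding fe tev_add_fun tev_cmult ..
        also have "\<dots> = 0"
          using e0 Hys[OF w, of b] phr[of b] dn by (simp add: field_simps)
        finally show "tev (\<lambda>p q. \<omega> p * \<phi> (q * b)) rest' = 0" .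
      qed
      have len': "length rest' < length ys" using Cons by (simp add: rest'_def)
      have "tev \<beta> rest' = 0" using less.hyps[OF len' H'] .
      moreover have "tev \<beta> rest' = tev \<beta> rest + (- (1 / d)) * tev (\<lambda>p q. \<beta> p r * \<phi> (q * b0)) rest"
      proof -
        have fe: "(\<lambda>p q. \<beta> p (g p q)) = (\<lambda>p q. \<beta> p q + (- (1 / d)) * (\<beta> p r * \<phi> (q * b0)))"
          by (auto simp: fun_eq_iff g_def clinear_add[OF linr] clinear_scale[OF linr])
        show ?thesis unfolding rest'_def tev_map_snd fe tev_add_fun tev_cmult ..
      qed
      moreover have "c1 * (\<beta> a1 r * \<phi> (r1 * b0)) + tev (\<lambda>p q. \<beta> p r * \<phi> (q * b0)) rest = 0"
        using Hys[OF linl] .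
      ultimately have F: "tev \<beta> rest + (- (1 / d)) * tev (\<lambda>p q. \<beta> p r * \<phi> (q * b0)) rest = 0"
        and F3: "c1 * (\<beta> a1 r * \<phi> (r1 * b0)) + tev (\<lambda>p q. \<beta> p r * \<phi> (q * b0)) rest = 0"
        by simp_all
      have cd: "c1 * (\<beta> a1 r * \<phi> (r1 * b0)) = \<beta> a1 r * d"
        unfolding d_def phr[of b0] by simp
      have T': "tev (\<lambda>p q. \<beta> p r * \<phi> (q * b0)) rest = - (\<beta> a1 r * d)"
        using F3 unfolding cd by (simp add: eq_neg_iff_add_eq_0 add.commute)
      have "tev \<beta> rest = - \<beta> a1 r"
        using F unfolding T' using dn by (simp add: eq_neg_iff_add_eq_0)
      then show ?thesis using Cons x betar[of a1] by simp
    qed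
  qed
qed

lemma omega_slice:
  assumes w: "clinear \<omega>"
  shows "\<omega> (slice_r \<phi> T) = tev (\<lambda>p q. \<omega> p * \<phi> q) (rep_tensor T)"
proof -
  have "\<omega> (\<Sum>((a, b), c) \<leftarrow> L. (c * \<phi> b) *\<^sub>C a) = tev (\<lambda>p q. \<omega> p * \<phi> q) L" for L
  proof (induction L)
    case Nil
    then show ?case by (simp add: clinear_zero[OF w])
  next
    case (Cons x L)
    obtain a b c where x: "x = ((a, b), c)" by (metis prod.collapse)
    show ?case using Cons by (simp add: x clinear_add[OF w] clinear_scale[OF w] algebra_simps)
  qed
  then show ?thesis unfolding slice_r_def .
qed

lemma bil_omega_phi: "clinear \<omega> \<Longrightarrow> clinear \<phi> \<Longrightarrow> cbilinear (\<lambda>p q. \<omega> p * \<phi> q)"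
  unfolding cbilinear_def clinear_def by (simp add: scaleC_complex_def algebra_simps)

lemma tens_prod_unit:
  assumes "is_identity e"
  shows "tens_prod_list [((e, e), 1)] Y = Y"
  using assms by (induction Y) (auto simp: tens_prod_list_def is_identity_def)

theorem lemma1p12:
  fixes \<Delta> :: "'a::calg \<Rightarrow> ('a, 'a) tensor" and e :: 'a
  assumes "algebraic_quantum_hypergroup e \<Delta>"
    and "is_identity e"
  shows "\<Delta> e = tp e e"
proof -
  have idl: "e * x = x" "x * e = x" for x using assms(2) unfolding is_identity_def by auto
  obtain \<phi> S where li: "left_integral e \<Delta> \<phi>" and fa: "faithful \<phi>" and an: "antipode_rel e \<Delta> \<phi> S"
    using assms(1) unfolding algebraic_quantum_hypergroup_def by blast
  have lin: "clinear \<phi>" and intg: "\<And>a. slice_r \<phi> (\<Delta> a) = \<phi> a *\<^sub>C e"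
    using li unfolding left_integral_def by auto
  have bS: "bij S" and lS: "clinear S" and aS: "\<And>x y. S (x * y) = S y * S x"
    and rel: "\<And>a b. S (slice_r \<phi> (\<Delta> a * tp e b)) = slice_r \<phi> (tp e a * \<Delta> b)"
    using an unfolding antipode_rel_def by auto
  have Se: "S e = e"
  proof -
    obtain y where y: "e = S y" using bS by (metis bij_pointE)
    have "S e = S e * e" by (simp add: idl)
    also have "\<dots> = S (y * e)" by (simp add: y aS)
    also have "\<dots> = e" by (metis idl(2) y)
    finally show ?thesis .
  qed
  have tpD: "tp e e * \<Delta> b = \<Delta> b" for b
  proof -
    have "tens_eq (tens_prod_list (rep_tensor (abs_tensor [((e, e), 1)])) (rep_tensor (\<Delta> b)))
        (tens_prod_list [((e, e), 1)] (rep_tensor (\<Delta> b)))"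
      by (rule tens_prod_resp[OF rep_abs tens_eq_refl])
    then have "tens_eq (tens_prod_list (rep_tensor (abs_tensor [((e, e), 1)])) (rep_tensor (\<Delta> b)))
        (rep_tensor (\<Delta> b))"
      by (simp add: tens_prod_unit[OF assms(2)])
    then have "abs_tensor (tens_prod_list (rep_tensor (abs_tensor [((e, e), 1)])) (rep_tensor (\<Delta> b)))
        = abs_tensor (rep_tensor (\<Delta> b))"
      by (simp add: tensor.abs_eq_iff)
    then show ?thesis by (simp add: times_tensor_def tp_def abs_rep)
  qed
  have sl: "slice_r \<phi> (\<Delta> e * tp e b) = \<phi> b *\<^sub>C e" for b
  proof -
    have "S (slice_r \<phi> (\<Delta> e * tp e b)) = \<phi> b *\<^sub>C e" by (simp add: rel tpD intg)
    also have "\<dots> = S (\<phi> b *\<^sub>C e)" using lS Se unfolding clinear_def by simp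
    finally show ?thesis using bS unfolding bij_def inj_def by blast
  qed
  define ys where "ys = rep_tensor (\<Delta> e) @ [((e, e), -1)]"
  have H: "\<forall>\<omega>::'a\<Rightarrow>complex. clinear \<omega> \<longrightarrow> (\<forall>b. tev (\<lambda>p q. \<omega> p * \<phi> (q * b)) ys = 0)"
  proof (intro allI impI)
    fix \<omega> :: "'a \<Rightarrow> complex" and b assume w: "clinear \<omega>"
    have bw: "cbilinear (\<lambda>p q. \<omega> p * \<phi> q)" by (rule bil_omega_phi[OF w lin])
    have "\<phi> b * \<omega> e = \<omega> (slice_r \<phi> (\<Delta> e * tp e b))" by (simp add: sl clinear_scale[OF w])
    also have "\<dots> = tev (\<lambda>p q. \<omega> p * \<phi> q) (rep_tensor (\<Delta> e * tp e b))"
      by (rule omega_slice[OF w])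
    also have "\<dots> = tev (\<lambda>p q. \<omega> p * \<phi> q) (tens_prod_list (rep_tensor (\<Delta> e)) [((e, b), 1)])"
    proof -
      have "tens_eq (rep_tensor (\<Delta> e * tp e b)) (tens_prod_list (rep_tensor (\<Delta> e)) [((e, b), 1)])"
        unfolding times_tensor_def tp_def
        using rep_abs tens_prod_resp[OF tens_eq_refl rep_abs]
        by (metis (no_types, lifting) tensor.abs_eq_iff)
      then show ?thesis using bw unfolding tens_eq_def by blast
    qed
    also have "\<dots> = tev (\<lambda>p q. \<omega> p * \<phi> (q * b)) (rep_tensor (\<Delta> e))"
      by (simp add: tev_prod_list idl)
    finally have "tev (\<lambda>p q. \<omega> p * \<phi> (q * b)) (rep_tensor (\<Delta> e)) = \<phi> b * \<omega> e" by simp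
    then show "tev (\<lambda>p q. \<omega> p * \<phi> (q * b)) ys = 0" by (simp add: ys_def tev_def idl)
  qed
  have "tens_eq (rep_tensor (\<Delta> e)) [((e, e), 1)]"
    unfolding tens_eq_def
  proof (intro allI impI)
    fix \<beta> :: "'a \<Rightarrow> 'a \<Rightarrow> complex" assume "cbilinear \<beta>"
    then have "tev \<beta> ys = 0" using core[OF lin fa _ H] by blast
    then show "tev \<beta> (rep_tensor (\<Delta> e)) = tev \<beta> [((e, e), 1)]"
      by (simp add: ys_def tev_def)
  qed
  then have "abs_tensor (rep_tensor (\<Delta> e)) = abs_tensor [((e, e), 1)]"
    by (simp add: tensor.abs_eq_iff)
  then show ?thesis by (simp add: abs_rep tp_def)
qed

end
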